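(* Let $\mathbb{F}$ be a field of characteristic $2$. The voltage with respect to $\ell$ of any cycle of length five in $\widetilde H_3(\mathbb{F})$ lies in the $\mathbb{F}_2$-subspace $W^{(2)}\oplus\langle U\rangle$ of $S_2(W)$.
   Context: Let $V=\mathbb{F}^4$, $V^*$ its dual. $\widetilde H_3(\mathbb{F})$ is the graph whose vertices are tensors $v\otimes f\in V\otimes V^*$ with $f(v)\neq0$, with $v\otimes f\perp w\otimes g$ iff $f(w)=g(v)=0$. Let $W=\bigwedge^2V$, fix an isomorphism $\chi:\bigwedge^4V\to\mathbb{F}$, identify $\bigwedge^2V^*$ with $(\bigwedge^2V)^*$ via $(f_1\wedge f_2)(v_1\wedge v_2)=f_1(v_1)f_2(v_2)-f_1(v_2)f_2(v_1)$, let $\psi:\bigwedge^2V\to\bigwedge^2V^*$ be $\psi(\hat w)(\hat v)=\chi(\hat v\wedge\hat w)$ and $\phi=\psi^{-1}$. $S_2(W)$ is the symmetric square of $W$ (product $ab$, $a^2=aa$), and $W^{(2)}=\langle\hat w^2:\hat w\in W\rangle$. $U=(w\wedge x)(y\wedge z)+(w\wedge y)(z\wedge x)+(w\wedge z)(x\wedge y)$ for any $w,x,y,z\in V$ with $\chi(w\wedge x\wedge y\wedge z)=1$ (independent of the choice); $\langle U\rangle$ denotes its $\mathbb{F}_2$-span. $\ell$ assigns to the dart from $v_1\otimes h_1$ to $v_2\otimes h_2$ the element $h_1(v_1)^{-1}h_2(v_2)^{-1}(v_1\wedge v_2)\,\phi(h_1\wedge h_2)$ of $S_2(W)$; the voltage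 of a cycle is the sum of the voltages of its darts. *)

theory Defs
  imports "HOL-Analysis.Analysis"
begin

text \<open>Coordinate model.  V = F^4 is \<open>'a^4\<close>; V* is also \<open>'a^4\<close>, with the
  evaluation pairing \<open>ev f v = f(v)\<close>.\<close>

definition ev :: "'a::comm_ring_1 ^ 4 \<Rightarrow> 'a ^ 4 \<Rightarrow> 'a" where
  "ev f v = (\<Sum>i\<in>UNIV. f $ i * v $ i)"

definition tens :: "'a::comm_ring_1 ^ 4 \<Rightarrow> 'a ^ 4 \<Rightarrow> 'a ^ 4 ^ 4" where
  "tens v f = (\<chi> i j. v $ i * f $ j)"

text \<open>Second exterior powers: an element of \<open>\<Lambda>\<^sup>2V\<close> (or \<open>\<Lambda>\<^sup>2V*\<close>) is an alternating
  matrix \<open>A\<close>, representing \<open>\<Sum>\<^sub>i\<^sub><\<^sub>j A_ij e_i\<and>e_j\<close>.\<close>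
definition alt :: "('a::comm_ring_1 ^ 4 ^ 4) set" where
  "alt = {A. (\<forall>i. A $ i $ i = 0) \<and> (\<forall>i j. A $ i $ j = - A $ j $ i)}"

definition wedge2 :: "'a::comm_ring_1 ^ 4 \<Rightarrow> 'a ^ 4 \<Rightarrow> 'a ^ 4 ^ 4" where
  "wedge2 v w = (\<chi> i j. v $ i * w $ j - v $ j * w $ i)"

definition pair2 :: "'a::comm_ring_1 ^ 4 ^ 4 \<Rightarrow> 'a ^ 4 ^ 4 \<Rightarrow> 'a" where
  "pair2 F A = (\<Sum>(i,j)\<in>{(i,j). i < j}. F $ i $ j * A $ i $ j)"

text \<open>Top exterior power \<open>\<Lambda>\<^sup>4V\<close> identified with F via
  \<open>w\<and>x\<and>y\<and>z \<mapsto> det[w,x,y,z]\<close>; the wedge product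
  \<open>\<Lambda>\<^sup>2V \<times> \<Lambda>\<^sup>2V \<rightarrow> \<Lambda>\<^sup>4V\<close> in these coordinates.\<close>
definition top4 :: "'a::comm_ring_1 ^ 4 \<Rightarrow> 'a ^ 4 \<Rightarrow> 'a ^ 4 \<Rightarrow> 'a ^ 4 \<Rightarrow> 'a" where
  "top4 w x y z = det (vector [w, x, y, z] :: 'a ^ 4 ^ 4)"

definition wedge22 :: "'a::comm_ring_1 ^ 4 ^ 4 \<Rightarrow> 'a ^ 4 ^ 4 \<Rightarrow> 'a" where
  "wedge22 A B = (\<Sum>(i,j)\<in>{(i,j). i < j}. \<Sum>(k,l)\<in>{(k,l). k < l}.
      A $ i $ j * B $ k $ l * top4 (axis i 1) (axis j 1) (axis k 1) (axis l 1))"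

text \<open>Every isomorphism \<open>\<chi> : \<Lambda>\<^sup>4V \<rightarrow> F\<close> is \<open>c \<cdot> (the identification above)\<close>
  for a unique \<open>c \<noteq> 0\<close>.  \<open>\<psi>(B)\<close> is the element of \<open>\<Lambda>\<^sup>2V*\<close> whose coordinates are
  \<open>\<psi>(B)(e_i\<and>e_j) = \<chi>((e_i\<and>e_j)\<and>B)\<close>; \<open>\<phi>\<close> is its inverse on \<open>\<Lambda>\<^sup>2\<close>.\<close>
definition psi :: "'a::comm_ring_1 \<Rightarrow> 'a ^ 4 ^ 4 \<Rightarrow> 'a ^ 4 ^ 4" where
  "psi c B = (\<chi> i j. c * wedge22 (wedge2 (axis i 1) (axis j 1)) B)"

definition phi :: "'a::comm_ring_1 \<Rightarrow> 'a ^ 4 ^ 4 \<Rightarrow> 'a ^ 4 ^ 4" where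
  "phi c = the_inv_into alt (psi c)"

text \<open>Symmetric square \<open>S_2(W)\<close>, \<open>W = \<Lambda>\<^sup>2V\<close> with basis \<open>e_p\<close>, \<open>p = (i,j)\<close>, \<open>i<j\<close>.
  An element \<open>\<Sum>\<^sub>p\<^sub>\<le>\<^sub>q s_pq e_p e_q\<close> is stored as the symmetric coefficient function
  \<open>s p q = s q p\<close> (zero outside basis indices), i.e. \<open>S_2(W)\<close> is modelled as the
  space of quadratic polynomials in the coordinates of W (polynomial-ring model
  of the symmetric power, valid in every characteristic).\<close>
definition bidx :: "(4 \<times> 4) set" where
  "bidx = {(i,j). i < j}"

definition smul :: "'a::comm_ring_1 ^ 4 ^ 4 \<Rightarrow> 'a ^ 4 ^ 4 \<Rightarrow> (4 \<times> 4) \<Rightarrow> (4 \<times> 4) \<Rightarrow> 'a" where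
  "smul A B = (\<lambda>p q. if p \<in> bidx \<and> q \<in> bidx then
       (if p = q then A $ fst p $ snd p * B $ fst p $ snd p
        else A $ fst p $ snd p * B $ fst q $ snd q + A $ fst q $ snd q * B $ fst p $ snd p)
     else 0)"

definition Wsq :: "((4 \<times> 4) \<Rightarrow> (4 \<times> 4) \<Rightarrow> 'a::comm_ring_1) set" where
  "Wsq = {s. \<exists>(n::nat) (lam::nat \<Rightarrow> 'a) (A::nat \<Rightarrow> 'a ^ 4 ^ 4).
             (\<forall>k<n. A k \<in> alt) \<and> s = (\<lambda>p q. \<Sum>k<n. lam k * smul (A k) (A k) p q)}"

definition Uel :: "'a::comm_ring_1 ^ 4 \<Rightarrow> 'a ^ 4 \<Rightarrow> 'a ^ 4 \<Rightarrow> 'a ^ 4 \<Rightarrow> (4 \<times> 4) \<Rightarrow> (4 \<times> 4) \<Rightarrow> 'a" where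
  "Uel w x y z = (\<lambda>p q. smul (wedge2 w x) (wedge2 y z) p q + smul (wedge2 w y) (wedge2 z x) p q
                       + smul (wedge2 w z) (wedge2 x y) p q)"

definition ell :: "'a::field \<Rightarrow> 'a ^ 4 \<Rightarrow> 'a ^ 4 \<Rightarrow> 'a ^ 4 \<Rightarrow> 'a ^ 4 \<Rightarrow> (4 \<times> 4) \<Rightarrow> (4 \<times> 4) \<Rightarrow> 'a" where
  "ell c v1 h1 v2 h2 = (\<lambda>p q. inverse (ev h1 v1) * inverse (ev h2 v2) *
       smul (wedge2 v1 v2) (phi c (wedge2 h1 h2)) p q)"

end

theory Submission
  imports Defs
begin

lemma char2_two: assumes "CHAR('a::field) = 2" shows "(2::'a) = 0"
  using of_nat_CHAR[where 'a='a] assms by simp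

lemma four0: "(4::4) = 0" by simp

lemma UNIV4: "(UNIV::4 set) = {0,1,2,3}"
  unfolding UNIV_4 four0 by auto

lemma sum4: "sum f (UNIV::4 set) = f 0 + f 1 + f 2 + f 3"
  unfolding UNIV4 by (simp add: ac_simps)

lemma ord4: "(0::4) < 1" "(0::4) < 2" "(0::4) < 3" "(1::4) < 2" "(1::4) < 3" "(2::4) < 3"
  by (simp_all add: less_bit0_def bit0.Rep_numeral bit0.Rep_0 bit0.Rep_1)

lemma vector_4:
 "(vector [a,b,c,d] ::('a::zero)^4)$1 = a"
 "(vector [a,b,c,d] ::('a::zero)^4)$2 = b"
 "(vector [a,b,c,d] ::('a::zero)^4)$3 = c"
 "(vector [a,b,c,d] ::('a::zero)^4)$0 = d"
  unfolding vector_def by simp_all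

lemma det_4:
  "det (A::'a::comm_ring_1^4^4) = 
A$1$1*A$2$2*A$3$3*A$4$4 + A$1$1*A$2$3*A$3$4*A$4$2 + A$1$1*A$2$4*A$3$2*A$4$3 + A$1$2*A$2$1*A$3$4*A$4$3 + A$1$2*A$2$3*A$3$1*A$4$4 + A$1$2*A$2$4*A$3$3*A$4$1 + A$1$3*A$2$1*A$3$2*A$4$4 + A$1$3*A$2$2*A$3$4*A$4$1 + A$1$3*A$2$4*A$3$1*A$4$2 + A$1$4*A$2$1*A$3$3*A$4$2 + A$1$4*A$2$2*A$3$1*A$4$3 + A$1$4*A$2$3*A$3$2*A$4$1 - (A$1$1*A$2$2*A$3$4*A$4$3 + A$1$1*A$2$3*A$3$2*A$4$4 + A$1$1*A$2$4*A$3$3*A$4$2 + A$1$2*A$2$1*A$3$3*A$4$4 + A$1$2*A$2$3*A$3$4*A$4$1 + A$1$2*A$2$4*A$3$1*A$4$3 + A$1$3*A$2$1*A$3$4*A$4$2 + A$1$3*A$2$2*A$3$1*A$4$4 + A$1$3*A$2$4*A$3$2*A$4$1 + A$1$4*A$2$1*A$3$2*A$4$3 + A$1$4*A$2$2*A$3$3*A$4$1 + A$1$4*A$2$3*A$3$1*A$4$2)"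
proof -
  have f1: "finite {2::4, 3, 4}" "1 \<notin> {2::4, 3, 4}"
    by auto
  have f2: "finite {3::4, 4}" "2 \<notin> {3::4, 4}"
    by auto
  have f3: "finite {4::4}" "3 \<notin> {4::4}"
    by auto
  show ?thesis
    unfolding det_def UNIV_4
    unfolding sum_over_permutations_insert[OF f1]
    unfolding sum_over_permutations_insert[OF f2]
    unfolding sum_over_permutations_insert[OF f3]
    unfolding permutes_sing
    by (simp add: sign_swap_id permutation_swap_id permutation_compose sign_compose sign_id swap_id_eq algebra_simps)
qed

lemmas det_4' = det_4[unfolded four0]

lemma top4_expand: "top4 w x y z = det (vector [w, x, y, z] :: 'a::comm_ring_1 ^ 4 ^ 4)"
  by (simp add: top4_def)

lemma pairs_lt: "{(i,j). (i::4) < j} = {(0,1),(0,2),(0,3),(1,2),(1,3),(2,3)}"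
proof -
  have "\<And>i j::4. i < j \<longleftrightarrow> (i,j) \<in> {(0,1),(0,2),(0,3),(1,2),(1,3),(2,3)}"
  proof -
    fix i j :: 4
    have "i \<in> {0,1,2,3}" "j \<in> {0,1,2,3}" using UNIV4 by auto
    then show "i < j \<longleftrightarrow> (i,j) \<in> {(0,1),(0,2),(0,3),(1,2),(1,3),(2,3)}"
      by (elim insertE emptyE; simp add: less_bit0_def bit0.Rep_numeral bit0.Rep_0 bit0.Rep_1)
  qed
  then show ?thesis by auto
qed

lemma bidx_expl: "bidx = {(0,1),(0,2),(0,3),(1,2),(1,3),(2,3)}"
  unfolding bidx_def pairs_lt ..

lemma wedge22_expand: "wedge22 A B = (- A $ 0 $ 1 * B $ 2 $ 3 + A $ 0 $ 2 * B $ 1 $ 3 - A $ 0 $ 3 * B $ 1 $ 2 - A $ 1 $ 2 * B $ 0 $ 3 + A $ 1 $ 3 * B $ 0 $ 2 - A $ 2 $ 3 * B $ 0 $ 1 :: 'a::comm_ring_1)"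
  unfolding wedge22_def pairs_lt top4_def
  by (simp add: det_4' vector_4 axis_def algebra_simps)

lemma alt_facts:
  assumes "B \<in> alt"
  shows "B$0$0 = 0" "B$1$1 = 0" "B$2$2 = 0" "B$3$3 = 0"
    "B$1$0 = - B$0$1" "B$2$0 = - B$0$2" "B$3$0 = - B$0$3"
    "B$2$1 = - B$1$2" "B$3$1 = - B$1$3" "B$3$2 = - B$2$3"
proof -
  have d: "\<forall>i. B$i$i = 0" and s: "\<forall>i j. B$i$j = - B$j$i" using assms unfolding alt_def by blast+
  show "B$0$0 = 0" "B$1$1 = 0" "B$2$2 = 0" "B$3$3 = 0" using d by blast+
  show "B$1$0 = - B$0$1" "B$2$0 = - B$0$2" "B$3$0 = - B$0$3"
    "B$2$1 = - B$1$2" "B$3$1 = - B$1$3" "B$3$2 = - B$2$3" using s by blast+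
qed

lemma cases4: obtains "(i::4) = 0" | "i = 1" | "i = 2" | "i = 3"
proof -
  have "i \<in> {0,1,2,3}" using UNIV4 by blast
  then show ?thesis using that by blast
qed

lemma psi_entries:
  "psi c B $ 0 $ 0 = 0" "psi c B $ 1 $ 1 = 0" "psi c B $ 2 $ 2 = 0" "psi c B $ 3 $ 3 = 0"
  "psi c B $ 0 $ 1 = - (c * B$2$3)" "psi c B $ 0 $ 2 = c * B$1$3" "psi c B $ 0 $ 3 = - (c * B$1$2)"
  "psi c B $ 1 $ 2 = - (c * B$0$3)" "psi c B $ 1 $ 3 = c * B$0$2" "psi c B $ 2 $ 3 = - (c * B$0$1)"
  "psi c B $ 1 $ 0 = c * B$2$3" "psi c B $ 2 $ 0 = - (c * B$1$3)" "psi c B $ 3 $ 0 = c * B$1$2"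
  "psi c B $ 2 $ 1 = c * B$0$3" "psi c B $ 3 $ 1 = - (c * B$0$2)" "psi c B $ 3 $ 2 = c * B$0$1"
  by (simp_all add: psi_def wedge22_expand wedge2_def axis_def)

lemma psi_inv:
  fixes c :: "'a::field"
  assumes "B \<in> alt" "c \<noteq> 0"
  shows "psi (inverse c) (psi c B) = B"
proof -
  note a = alt_facts[OF assms(1)]
  have "psi (inverse c) (psi c B) $ i $ j = B $ i $ j" for i j
    by (cases i rule: cases4; cases j rule: cases4; simp add: psi_entries a assms(2))
  then show ?thesis by (simp add: vec_eq_iff)
qed

lemma psi_alt: "psi c B \<in> alt"
proof -
  have "psi c B $ i $ i = 0" for i
    by (cases i rule: cases4; simp add: psi_entries)
  moreover have "psi c B $ i $ j = - psi c B $ j $ i" for i j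
    by (cases i rule: cases4; cases j rule: cases4; simp add: psi_entries)
  ultimately show ?thesis unfolding alt_def by blast
qed

lemma wedge2_alt: "wedge2 v w \<in> alt"
  unfolding alt_def wedge2_def by simp

lemma phi_eq:
  fixes c :: "'a::field"
  assumes "A \<in> alt" "c \<noteq> 0"
  shows "phi c A = psi (inverse c) A"
proof -
  have inj: "inj_on (psi c) alt"
  proof (rule inj_onI)
    fix x y
    assume xy: "x \<in> alt" "y \<in> alt" "psi c x = psi c y"
    have "x = psi (inverse c) (psi c x)" using psi_inv[of x c] xy assms(2) by simp
    also have "\<dots> = psi (inverse c) (psi c y)" using xy by simp
    also have "\<dots> = y" using psi_inv[of y c] xy assms(2) by simp
    finally show "x = y" .
  qed
  have "psi c (psi (inverse c) A) = A"
    using psi_inv[of A "inverse c"] assms by simp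
  then show ?thesis unfolding phi_def
    by (rule the_inv_into_f_eq[OF inj _ psi_alt])
qed

definition TT :: "'a::comm_ring_1 ^ 4 \<Rightarrow> 'a ^ 4 \<Rightarrow> (4 \<times> 4) \<Rightarrow> (4 \<times> 4) \<Rightarrow> 'a" where
  "TT v h p q = (if p = (0,1) \<and> q = (0,2) then v $ 0 * h $ 3
   else if p = (0,1) \<and> q = (0,3) then v $ 0 * h $ 2
   else if p = (0,1) \<and> q = (1,2) then v $ 1 * h $ 3
   else if p = (0,1) \<and> q = (1,3) then v $ 1 * h $ 2
   else if p = (0,1) \<and> q = (2,3) then v $ 0 * h $ 0 + v $ 1 * h $ 1
   else if p = (0,2) \<and> q = (0,1) then v $ 0 * h $ 3
   else if p = (0,2) \<and> q = (0,3) then v $ 0 * h $ 1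
   else if p = (0,2) \<and> q = (1,2) then v $ 2 * h $ 3
   else if p = (0,2) \<and> q = (1,3) then v $ 0 * h $ 0 + v $ 2 * h $ 2
   else if p = (0,2) \<and> q = (2,3) then v $ 2 * h $ 1
   else if p = (0,3) \<and> q = (0,1) then v $ 0 * h $ 2
   else if p = (0,3) \<and> q = (0,2) then v $ 0 * h $ 1
   else if p = (0,3) \<and> q = (1,2) then v $ 1 * h $ 1 + v $ 2 * h $ 2
   else if p = (0,3) \<and> q = (1,3) then v $ 3 * h $ 2
   else if p = (0,3) \<and> q = (2,3) then v $ 3 * h $ 1
   else if p = (1,2) \<and> q = (0,1) then v $ 1 * h $ 3
   else if p = (1,2) \<and> q = (0,2) then v $ 2 * h $ 3
   else if p = (1,2) \<and> q = (0,3) then v $ 1 * h $ 1 + v $ 2 * h $ 2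
   else if p = (1,2) \<and> q = (1,3) then v $ 1 * h $ 0
   else if p = (1,2) \<and> q = (2,3) then v $ 2 * h $ 0
   else if p = (1,3) \<and> q = (0,1) then v $ 1 * h $ 2
   else if p = (1,3) \<and> q = (0,2) then v $ 0 * h $ 0 + v $ 2 * h $ 2
   else if p = (1,3) \<and> q = (0,3) then v $ 3 * h $ 2
   else if p = (1,3) \<and> q = (1,2) then v $ 1 * h $ 0
   else if p = (1,3) \<and> q = (2,3) then v $ 3 * h $ 0
   else if p = (2,3) \<and> q = (0,1) then v $ 0 * h $ 0 + v $ 1 * h $ 1
   else if p = (2,3) \<and> q = (0,2) then v $ 2 * h $ 1
   else if p = (2,3) \<and> q = (0,3) then v $ 3 * h $ 1
   else if p = (2,3) \<and> q = (1,2) then v $ 2 * h $ 0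
   else if p = (2,3) \<and> q = (1,3) then v $ 3 * h $ 0
   else 0)"

definition U0 :: "(4 \<times> 4) \<Rightarrow> (4 \<times> 4) \<Rightarrow> 'a::comm_ring_1" where
  "U0 p q = (if (p,q) \<in> {((0,1),(2,3)), ((2,3),(0,1)), ((0,2),(1,3)), ((1,3),(0,2)), ((0,3),(1,2)), ((1,2),(0,3))} then 1 else 0)"

lemma c2_neg: "(2::'a::comm_ring_1) = 0 \<Longrightarrow> - x = (x::'a)"
  by (metis add_eq_0_iff2 mult_2 mult_zero_left)

lemma c2_add: "(2::'a::comm_ring_1) = 0 \<Longrightarrow> x + x = (0::'a)"
  by (metis mult_2 mult_zero_left)

lemma c2_add2: "(2::'a::comm_ring_1) = 0 \<Longrightarrow> x + (x + y) = (y::'a)"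
  by (metis add.assoc add_0 c2_add)

lemma bidx_cases:
  assumes "p \<in> bidx"
  obtains "p = (0,1)" | "p = (0,2)" | "p = (0,3)" | "p = (1,2)" | "p = (1,3)" | "p = (2,3)"
  using assms unfolding bidx_expl by blast

lemma dart:
  fixes ci :: "'a::field"
  assumes two: "(2::'a) = 0" and pq: "p \<in> bidx" "q \<in> bidx" "p \<noteq> q"
  shows "smul (wedge2 v1 v2) (psi ci (wedge2 h1 h2)) p q = ci * (ev h2 v2 * TT v1 h1 p q + ev h1 v1 * TT v2 h2 p q + ev h1 v2 * TT v1 h2 p q + ev h2 v1 * TT v2 h1 p q + (ev h1 v1 * ev h2 v2 + ev h1 v2 * ev h2 v1) * U0 p q)"
  using pq
  by (elim bidx_cases; simp add: smul_def bidx_expl psi_entries wedge2_def ev_def sum4 TT_def U0_def;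
      simp only: diff_conv_add_uminus c2_neg[OF two]; simp add: algebra_simps c2_add[OF two] c2_add2[OF two])

lemma Uel_off:
  assumes two: "(2::'a::comm_ring_1) = 0" and pq: "p \<in> bidx" "q \<in> bidx" "p \<noteq> q"
  shows "Uel w x y z p q = top4 w x y z * (U0 p q :: 'a)"
  using pq
  by (elim bidx_cases; simp add: Uel_def smul_def bidx_expl wedge2_def top4_def det_4' vector_4 U0_def;
      simp only: diff_conv_add_uminus c2_neg[OF two]; simp add: algebra_simps c2_add[OF two] c2_add2[OF two])

lemma E_entry:
  assumes "p \<in> bidx" "r \<in> bidx"
  shows "wedge2 (axis (fst r) 1) (axis (snd r) 1) $ fst p $ snd p = (if p = r then 1 else (0::'a::comm_ring_1))"
  using assms by (elim bidx_cases; simp add: wedge2_def axis_def)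

lemma smul_E:
  assumes "r \<in> bidx"
  shows "smul (wedge2 (axis (fst r) 1) (axis (snd r) 1)) (wedge2 (axis (fst r) 1) (axis (snd r) 1)) p q
     = (if p = r \<and> q = r then 1 else (0::'a::comm_ring_1))"
proof (cases "p \<in> bidx \<and> q \<in> bidx")
  case True
  then show ?thesis using assms by (auto simp: smul_def E_entry)
next
  case False
  then show ?thesis using assms by (auto simp: smul_def)
qed

lemma sum6: "(\<Sum>k<(6::nat). F k) = F 0 + F 1 + F 2 + F 3 + F 4 + (F 5 :: 'a::comm_monoid_add)"
  by (simp add: numeral_eq_Suc)

lemma sum5: "(\<Sum>k<(5::nat). F k) = F 0 + F 1 + F 2 + F 3 + (F 4 :: 'a::comm_monoid_add)"
  by (simp add: numeral_eq_Suc)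

lemma diag_Wsq:
  assumes "\<And>p q. p \<noteq> q \<or> p \<notin> bidx \<Longrightarrow> s p q = (0::'a::comm_ring_1)"
  shows "s \<in> Wsq"
proof -
  define P where "P = [(0::4,1::4),(0,2),(0,3),(1,2),(1,3),(2,3)]"
  define lam where "lam = (\<lambda>k. s (P!k) (P!k))"
  define A where "A = (\<lambda>k. wedge2 (axis (fst (P!k)) 1) (axis (snd (P!k)) 1) :: 'a^4^4)"
  have Pb: "P!k \<in> bidx" if "k < 6" for k
    using that unfolding P_def bidx_expl by (auto simp: less_Suc_eq numeral_eq_Suc)
  have "s p q = (\<Sum>k<6. lam k * smul (A k) (A k) p q)" for p q
  proof -
    have "(\<Sum>k<6. lam k * smul (A k) (A k) p q) = (\<Sum>k<6. lam k * (if p = P!k \<and> q = P!k then 1 else 0))"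
      by (rule sum.cong[OF refl]) (simp add: A_def smul_E Pb)
    also have "\<dots> = s p q"
    proof (cases "p = q \<and> p \<in> bidx")
      case True
      have qp: "q = p" and pb: "p \<in> bidx" using True by auto
      show ?thesis unfolding qp using pb by (elim bidx_cases; simp add: sum6 lam_def P_def)
    next
      case False
      then have "s p q = 0" using assms by blast
      moreover have "\<not> (p = P!k \<and> q = P!k)" if "k < 6" for k
        using False Pb[OF that] by auto
      then have "(\<Sum>k<6. lam k * (if p = P!k \<and> q = P!k then 1 else 0)) = (0::'a)"
        by (intro sum.neutral) auto
      with \<open>s p q = 0\<close> show ?thesis by simp
    qed
    finally show ?thesis by simp
  qed
  then have "s = (\<lambda>p q. \<Sum>k<6. lam k * smul (A k) (A k) p q)" by (intro ext)
  moreover have "\<forall>k<6. A k \<in> alt" unfolding A_def using wedge2_alt by blast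
  ultimately show ?thesis unfolding Wsq_def by blast
qed

lemma tele:
  assumes two: "(2::'a::comm_ring_1) = 0"
  shows "(\<Sum>k<5. ci * (g k + g (Suc k mod 5) + u)) = ci * (u::'a)"
proof -
  have m: "Suc 0 mod 5 = 1" "Suc 1 mod 5 = 2" "Suc 2 mod 5 = 3" "Suc 3 mod 5 = 4" "Suc 4 mod 5 = (0::nat)"
    by simp_all
  show ?thesis
    by (simp only: sum5 m; simp add: algebra_simps c2_add[OF two] c2_add2[OF two])
qed

lemma ell_step:
  fixes c :: "'a::field"
  assumes two: "(2::'a) = 0" and c: "c \<noteq> 0" and d: "ev h1 v1 \<noteq> 0" "ev h2 v2 \<noteq> 0"
    and adj: "ev h1 v2 = 0" "ev h2 v1 = 0"
    and pq: "p \<in> bidx" "q \<in> bidx" "p \<noteq> q"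
  shows "ell c v1 h1 v2 h2 p q = inverse c * (inverse (ev h1 v1) * TT v1 h1 p q + inverse (ev h2 v2) * TT v2 h2 p q + U0 p q)"
  unfolding ell_def phi_eq[OF wedge2_alt c] dart[OF two pq] adj
  using d by (simp add: field_simps)

theorem lemma3p10:
  fixes c :: "'a::field"
    and v f :: "nat \<Rightarrow> 'a ^ 4"
    and w x y z :: "'a ^ 4"
  assumes char2: "CHAR('a) = 2"
    and chi_iso: "c \<noteq> 0"
    and U_choice: "c * top4 w x y z = 1"
    and vertices: "\<forall>k<5. ev (f k) (v k) \<noteq> 0"
    and distinct: "inj_on (\<lambda>k. tens (v k) (f k)) {..<5}"
    and adjacent: "\<forall>k<5. ev (f k) (v (Suc k mod 5)) = 0 \<and> ev (f (Suc k mod 5)) (v k) = 0"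
  shows "\<exists>s\<in>Wsq. \<exists>e\<in>{0, 1::'a}.
           (\<lambda>p q. \<Sum>k<5. ell c (v k) (f k) (v (Suc k mod 5)) (f (Suc k mod 5)) p q)
             = (\<lambda>p q. s p q + e * Uel w x y z p q)"
proof -
  have two: "(2::'a) = 0" using char2_two[OF char2] .
  define L where "L = (\<lambda>p q. \<Sum>k<5. ell c (v k) (f k) (v (Suc k mod 5)) (f (Suc k mod 5)) p q)"
  have top: "top4 w x y z = inverse c" using inverse_unique[OF U_choice] by simp
  have off: "L p q = inverse c * U0 p q" if pq: "p \<in> bidx" "q \<in> bidx" "p \<noteq> q" for p q
  proof -
    define g where "g = (\<lambda>k. inverse (ev (f k) (v k)) * TT (v k) (f k) p q)"
    have "L p q = (\<Sum>k<5. inverse c * (g k + g (Suc k mod 5) + U0 p q))"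
      unfolding L_def
    proof (rule sum.cong[OF refl])
      fix k assume "k \<in> {..<(5::nat)}"
      then have k: "k < 5" by simp
      have k': "Suc k mod 5 < 5" by simp
      show "ell c (v k) (f k) (v (Suc k mod 5)) (f (Suc k mod 5)) p q = inverse c * (g k + g (Suc k mod 5) + U0 p q)"
        unfolding g_def
        by (rule ell_step[OF two chi_iso vertices[rule_format, OF k] vertices[rule_format, OF k']
              conjunct1[OF adjacent[rule_format, OF k]] conjunct2[OF adjacent[rule_format, OF k]] pq])
    qed
    also have "\<dots> = inverse c * U0 p q" by (rule tele[OF two])
    finally show ?thesis .
  qed
  have zero: "L p q = 0 \<and> Uel w x y z p q = 0" if "\<not> (p \<in> bidx \<and> q \<in> bidx)" for p q
    using that by (auto simp: L_def ell_def smul_def Uel_def)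
  define s where "s = (\<lambda>p q. L p q - Uel w x y z p q)"
  have sW: "s \<in> Wsq"
  proof (rule diag_Wsq)
    fix p q assume pq: "p \<noteq> q \<or> p \<notin> bidx"
    show "s p q = 0"
    proof (cases "p \<in> bidx \<and> q \<in> bidx")
      case True
      then have "p \<noteq> q" using pq by blast
      then show ?thesis using True off[of p q] Uel_off[OF two, of p q w x y z] top
        by (simp add: s_def)
    next
      case False
      then show ?thesis using zero[OF False] by (simp add: s_def)
    qed
  qed
  have "(\<lambda>p q. \<Sum>k<5. ell c (v k) (f k) (v (Suc k mod 5)) (f (Suc k mod 5)) p q)
             = (\<lambda>p q. s p q + 1 * Uel w x y z p q)"
    unfolding s_def L_def by simp
  then show ?thesis using sW by blast
qed

end
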